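(* Let $\mathcal{C}_i\in\mathbb{R}^{n_{1i}\times n_{2i}\times d_i}$ and let $\Phi_{\theta_i}:\mathbb{R}\to\mathbb{R}^{d_i}$ be an $L$-layer multilayer perceptron with weight matrices $\mathbf{W}_1,\dots,\mathbf{W}_L$ and activation function $\sigma:\mathbb{R}\to\mathbb{R}$ (applied entrywise) that is Lipschitz continuous with Lipschitz constant $L_\sigma$. Define $\widetilde{\mathbf{G}}_i(p)=\mathcal{C}_i\times_3\Phi_{\theta_i}(p)$. Assume $\|\mathcal{C}_i\|_1\le\kappa$ and $\|\mathbf{W}_\ell\|_1\le\eta$ for every $\ell=1,\dots,L$. Then for all $p_1,p_2\in\mathbb{R}$, $$\|\widetilde{\mathbf{G}}_i(p_1)-\widetilde{\mathbf{G}}_i(p_2)\|_F\le\kappa\,(L_\sigma\eta)^L\,|p_1-p_2|.$$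
   Context: The $L$-layer MLP is $\mathbf{h}^{(0)}=p\in\mathbb{R}$, $\mathbf{h}^{(\ell)}=\sigma(\mathbf{W}_\ell\mathbf{h}^{(\ell-1)}+\mathbf{b}_\ell)$ for $\ell=1,\dots,L$ (with bias vectors $\mathbf{b}_\ell$, possibly zero), and $\Phi_{\theta_i}(p)=\mathbf{h}^{(L)}\in\mathbb{R}^{d_i}$; the weight matrices have compatible sizes with $\mathbf{W}_1$ having one column and $\mathbf{W}_L$ having $d_i$ rows. For a matrix or tensor, $\|\cdot\|_1$ denotes the entrywise $\ell_1$ norm (sum of absolute values of all entries), and $\|\cdot\|_F$ the Frobenius norm. For $\mathcal{C}\in\mathbb{R}^{n_1\times n_2\times d}$ and $\mathbf{x}\in\mathbb{R}^d$, $\mathcal{C}\times_3\mathbf{x}:=\sum_{\ell=1}^d x_\ell\,\mathcal{C}(:,:,\ell)\in\mathbb{R}^{n_1\times n_2}$. *)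

theory Defs
  imports "HOL-Analysis.Analysis"
begin

text \<open>Vectors, matrices and 3-tensors with varying sizes are represented as
functions on natural-number indices, with the sizes kept as explicit bounds.
Layer widths: m 0 = 1 (scalar input), m L = d (output dimension).
Weight matrix W l has size (m l) x (m (l-1)); bias b l has length m l.\<close>

fun mlp_h :: "(real \<Rightarrow> real) \<Rightarrow> (nat \<Rightarrow> nat \<Rightarrow> nat \<Rightarrow> real) \<Rightarrow> (nat \<Rightarrow> nat \<Rightarrow> real)
    \<Rightarrow> (nat \<Rightarrow> nat) \<Rightarrow> real \<Rightarrow> nat \<Rightarrow> nat \<Rightarrow> real" where
  "mlp_h \<sigma> W b m p 0 = (\<lambda>_. p)"
| "mlp_h \<sigma> W b m p (Suc l) =
     (\<lambda>j. \<sigma> ((\<Sum>k<m l. W (Suc l) j k * mlp_h \<sigma> W b m p l k) + b (Suc l) j))"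

definition mat_l1 :: "nat \<Rightarrow> nat \<Rightarrow> (nat \<Rightarrow> nat \<Rightarrow> real) \<Rightarrow> real" where
  "mat_l1 r c A = (\<Sum>j<r. \<Sum>k<c. \<bar>A j k\<bar>)"

definition tensor_l1 :: "nat \<Rightarrow> nat \<Rightarrow> nat \<Rightarrow> (nat \<Rightarrow> nat \<Rightarrow> nat \<Rightarrow> real) \<Rightarrow> real" where
  "tensor_l1 n1 n2 d C = (\<Sum>a<n1. \<Sum>c<n2. \<Sum>l<d. \<bar>C a c l\<bar>)"

definition mode3 :: "nat \<Rightarrow> (nat \<Rightarrow> nat \<Rightarrow> nat \<Rightarrow> real) \<Rightarrow> (nat \<Rightarrow> real) \<Rightarrow> nat \<Rightarrow> nat \<Rightarrow> real" where
  "mode3 d C x = (\<lambda>a c. \<Sum>l<d. x l * C a c l)"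

definition frob :: "nat \<Rightarrow> nat \<Rightarrow> (nat \<Rightarrow> nat \<Rightarrow> real) \<Rightarrow> real" where
  "frob n1 n2 A = sqrt (\<Sum>a<n1. \<Sum>c<n2. (A a c)\<^sup>2)"

end

theory Submission
  imports Defs
begin

lemma sum_sq_le_sq_sum:
  fixes f :: "'a \<Rightarrow> real"
  assumes "finite A" "\<And>x. x \<in> A \<Longrightarrow> f x \<ge> 0"
  shows "(\<Sum>x\<in>A. (f x)\<^sup>2) \<le> (\<Sum>x\<in>A. f x)\<^sup>2"
  using assms
proof (induction A rule: finite_induct)
  case empty then show ?case by simp
next
  case (insert a A)
  have s: "0 \<le> (\<Sum>x\<in>A. f x)" using insert by (simp add: sum_nonneg)
  have fa: "0 \<le> f a" using insert by simp
  have "(\<Sum>x\<in>insert a A. (f x)\<^sup>2) = (f a)\<^sup>2 + (\<Sum>x\<in>A. (f x)\<^sup>2)" using insert by simp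
  also have "\<dots> \<le> (f a)\<^sup>2 + (\<Sum>x\<in>A. f x)\<^sup>2" using insert by simp
  also have "\<dots> \<le> (f a + (\<Sum>x\<in>A. f x))\<^sup>2" using s fa by (simp add: power2_eq_square algebra_simps)
  also have "\<dots> = (\<Sum>x\<in>insert a A. f x)\<^sup>2" using insert by simp
  finally show ?case .
qed

lemma frob_le_l1: "frob n1 n2 A \<le> (\<Sum>a<n1. \<Sum>c<n2. \<bar>A a c\<bar>)"
proof -
  have "(\<Sum>a<n1. \<Sum>c<n2. (A a c)\<^sup>2) = (\<Sum>a<n1. \<Sum>c<n2. \<bar>A a c\<bar>\<^sup>2)" by simp
  also have "\<dots> \<le> (\<Sum>a<n1. (\<Sum>c<n2. \<bar>A a c\<bar>)\<^sup>2)"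
    by (intro sum_mono sum_sq_le_sq_sum) auto
  also have "\<dots> \<le> (\<Sum>a<n1. \<Sum>c<n2. \<bar>A a c\<bar>)\<^sup>2"
    by (intro sum_sq_le_sq_sum) (auto intro: sum_nonneg)
  finally have "(\<Sum>a<n1. \<Sum>c<n2. (A a c)\<^sup>2) \<le> (\<Sum>a<n1. \<Sum>c<n2. \<bar>A a c\<bar>)\<^sup>2" .
  then have "frob n1 n2 A \<le> sqrt ((\<Sum>a<n1. \<Sum>c<n2. \<bar>A a c\<bar>)\<^sup>2)"
    unfolding frob_def by (rule real_sqrt_le_mono)
  also have "\<dots> = (\<Sum>a<n1. \<Sum>c<n2. \<bar>A a c\<bar>)" by (simp add: sum_nonneg)
  finally show ?thesis .
qed

theorem theorem2:
  fixes C :: "nat \<Rightarrow> nat \<Rightarrow> nat \<Rightarrow> real" and n1 n2 d L :: nat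
    and m :: "nat \<Rightarrow> nat" and W :: "nat \<Rightarrow> nat \<Rightarrow> nat \<Rightarrow> real" and b :: "nat \<Rightarrow> nat \<Rightarrow> real"
    and \<sigma> :: "real \<Rightarrow> real" and L\<sigma> \<kappa> \<eta> p1 p2 :: real
  assumes "1 \<le> L"
    and "m 0 = 1" and "m L = d"
    and "L\<sigma>-lipschitz_on UNIV \<sigma>"
    and "tensor_l1 n1 n2 d C \<le> \<kappa>"
    and "\<forall>l\<in>{1..L}. mat_l1 (m l) (m (l - 1)) (W l) \<le> \<eta>"
  shows "frob n1 n2 (\<lambda>a c. mode3 d C (mlp_h \<sigma> W b m p1 L) a c - mode3 d C (mlp_h \<sigma> W b m p2 L) a c)
           \<le> \<kappa> * (L\<sigma> * \<eta>) ^ L * \<bar>p1 - p2\<bar>"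
proof -
  define h1 where "h1 = mlp_h \<sigma> W b m p1"
  define h2 where "h2 = mlp_h \<sigma> W b m p2"
  have Ls: "0 \<le> L\<sigma>" using assms(4) by (simp add: lipschitz_on_def)
  have lip: "\<bar>\<sigma> x - \<sigma> y\<bar> \<le> L\<sigma> * \<bar>x - y\<bar>" for x y
    using assms(4) unfolding lipschitz_on_def dist_real_def by auto
  have eta: "0 \<le> \<eta>"
  proof -
    have "0 \<le> mat_l1 (m 1) (m 0) (W 1)" unfolding mat_l1_def by (intro sum_nonneg) auto
    moreover have "mat_l1 (m 1) (m (1 - 1)) (W 1) \<le> \<eta>" using assms(1,6) by (metis atLeastAtMost_iff order_refl)
    ultimately show ?thesis by simp
  qed
  have kap: "0 \<le> \<kappa>"
  proof -
    have "0 \<le> tensor_l1 n1 n2 d C" unfolding tensor_l1_def by (intro sum_nonneg) auto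
    then show ?thesis using assms(5) by linarith
  qed
  have layer: "l \<le> L \<Longrightarrow> \<forall>j<m l. \<bar>h1 l j - h2 l j\<bar> \<le> (L\<sigma> * \<eta>) ^ l * \<bar>p1 - p2\<bar>" for l
  proof (induction l)
    case 0 then show ?case by (simp add: h1_def h2_def)
  next
    case (Suc l)
    then have IH: "\<forall>j<m l. \<bar>h1 l j - h2 l j\<bar> \<le> (L\<sigma> * \<eta>) ^ l * \<bar>p1 - p2\<bar>" by simp
    have Wb: "mat_l1 (m (Suc l)) (m l) (W (Suc l)) \<le> \<eta>" using assms(6) Suc.prems by force
    show ?case
    proof (intro allI impI)
      fix j assume j: "j < m (Suc l)"
      let ?D = "(L\<sigma> * \<eta>) ^ l * \<bar>p1 - p2\<bar>"
      have D0: "0 \<le> ?D" using Ls eta by simp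
      have "\<bar>h1 (Suc l) j - h2 (Suc l) j\<bar> \<le> L\<sigma> * \<bar>(\<Sum>k<m l. W (Suc l) j k * h1 l k) - (\<Sum>k<m l. W (Suc l) j k * h2 l k)\<bar>"
        unfolding h1_def h2_def using lip by (metis (no_types, lifting) add_diff_cancel_right mlp_h.simps(2))
      also have "\<bar>(\<Sum>k<m l. W (Suc l) j k * h1 l k) - (\<Sum>k<m l. W (Suc l) j k * h2 l k)\<bar>
          = \<bar>\<Sum>k<m l. W (Suc l) j k * (h1 l k - h2 l k)\<bar>"
        by (simp add: sum_subtractf[symmetric] algebra_simps)
      also have "\<dots> \<le> (\<Sum>k<m l. \<bar>W (Suc l) j k\<bar> * \<bar>h1 l k - h2 l k\<bar>)"
        by (rule order_trans[OF sum_abs]) (simp add: abs_mult)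
      also have "\<dots> \<le> (\<Sum>k<m l. \<bar>W (Suc l) j k\<bar> * ?D)"
        using IH by (intro sum_mono mult_left_mono) auto
      also have "\<dots> = (\<Sum>k<m l. \<bar>W (Suc l) j k\<bar>) * ?D" by (simp add: sum_distrib_right)
      also have "(\<Sum>k<m l. \<bar>W (Suc l) j k\<bar>) \<le> mat_l1 (m (Suc l)) (m l) (W (Suc l))"
        unfolding mat_l1_def
        using member_le_sum[of j "{..<m (Suc l)}" "\<lambda>j. \<Sum>k<m l. \<bar>W (Suc l) j k\<bar>"] j
        by (auto intro: sum_nonneg)
      finally have "\<bar>h1 (Suc l) j - h2 (Suc l) j\<bar> \<le> L\<sigma> * (mat_l1 (m (Suc l)) (m l) (W (Suc l)) * ?D)"
        using Ls D0 by (simp add: mult_left_mono mult_right_mono)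
      also have "\<dots> \<le> L\<sigma> * (\<eta> * ?D)"
        using Ls D0 Wb by (intro mult_left_mono mult_right_mono) auto
      also have "\<dots> = (L\<sigma> * \<eta>) ^ Suc l * \<bar>p1 - p2\<bar>" by (simp add: algebra_simps)
      finally show "\<bar>h1 (Suc l) j - h2 (Suc l) j\<bar> \<le> (L\<sigma> * \<eta>) ^ Suc l * \<bar>p1 - p2\<bar>" .
    qed
  qed
  let ?D = "(L\<sigma> * \<eta>) ^ L * \<bar>p1 - p2\<bar>"
  have DL: "\<forall>l<d. \<bar>h1 L l - h2 L l\<bar> \<le> ?D" using layer[of L] assms(3) by simp
  have D0: "0 \<le> ?D" using Ls eta by simp
  have ent: "\<bar>mode3 d C (h1 L) a c - mode3 d C (h2 L) a c\<bar> \<le> ?D * (\<Sum>l<d. \<bar>C a c l\<bar>)" for a c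
  proof -
    have "\<bar>mode3 d C (h1 L) a c - mode3 d C (h2 L) a c\<bar> = \<bar>\<Sum>l<d. (h1 L l - h2 L l) * C a c l\<bar>"
      unfolding mode3_def by (simp add: sum_subtractf[symmetric] algebra_simps)
    also have "\<dots> \<le> (\<Sum>l<d. \<bar>h1 L l - h2 L l\<bar> * \<bar>C a c l\<bar>)"
      by (rule order_trans[OF sum_abs]) (simp add: abs_mult)
    also have "\<dots> \<le> (\<Sum>l<d. ?D * \<bar>C a c l\<bar>)"
      using DL by (intro sum_mono mult_right_mono) auto
    finally show ?thesis by (simp add: sum_distrib_left)
  qed
  have "frob n1 n2 (\<lambda>a c. mode3 d C (h1 L) a c - mode3 d C (h2 L) a c)
      \<le> (\<Sum>a<n1. \<Sum>c<n2. \<bar>mode3 d C (h1 L) a c - mode3 d C (h2 L) a c\<bar>)"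
    by (rule frob_le_l1)
  also have "\<dots> \<le> (\<Sum>a<n1. \<Sum>c<n2. ?D * (\<Sum>l<d. \<bar>C a c l\<bar>))"
    using ent by (intro sum_mono) auto
  also have "\<dots> = ?D * tensor_l1 n1 n2 d C" unfolding tensor_l1_def by (simp add: sum_distrib_left)
  also have "\<dots> \<le> ?D * \<kappa>" using D0 assms(5) by (intro mult_left_mono)
  finally show ?thesis unfolding h1_def h2_def by (simp add: algebra_simps)
qed

end
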